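(* Let $V$ be a finite set of variables and let $(\mathit{base}_0, \mathit{stay}_0, \mathit{step}_0, \mathit{conc}_0)$ and $(\mathit{base}_1, \mathit{stay}_1, \mathit{step}_1, \mathit{conc}_1)$ be generalized acceleration lemmas (GALs) over $V$. Let $\mathit{step} := (\mathit{conc}_0 \land \mathit{step}_0 ) \lor (\mathit{conc}_1 \land \mathit{step}_1 \land \mathit{stay}_0)$. Then the tuple $(\mathit{base}_0 \lor \mathit{base}_1,\ \mathit{stay}_0 \land \mathit{stay}_1,\ \mathit{step},\ \mathit{conc}_0 \lor \mathit{conc}_1)$ is also a GAL over $V$.
   Context: Fix a first-order theory $T$. For a set of variables $X$, $\mathcal{A}(X)$ denotes the set of assignments $\nu: X \to \mathcal{V}$ (values). $X' = \{x' \mid x \in X\}$ is a disjoint primed copy of $X$; for $\nu \in \mathcal{A}(X)$, $\nu' \in \mathcal{A}(X')$ is given by $\nu'(x') = \nu(x)$; for $\nu_1,\nu_2 \in \mathcal{A}(X)$, $\langle \nu_1,\nu_2\rangle := \nu_1 \uplus \nu_2'$. $\nu \models_T \alpha$ denotes entailment in $T$. A generalized acceleration lemma (GAL) over $V$ is a tuple $(\mathit{base}, \mathit{stay}, \mathit{step}, \mathit{conc})$ of first-order formulas with $\mathit{base}, \mathit{conc}$ having free variables in $V$ and $\mathit{stay}, \mathit{step}$ having free variables in $V \cup V'$, such that: (I) for every sequence $\alpha \in \mathcal{A}(V)^\omega$ with $\alpha[0] \models_T \mathit{conc}$, if (a) for all $i$, $\langle\alpha[i],\alpha[i+1]\rangle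 \models_T \mathit{step} \lor \mathit{stay}$, and (b) for all $i$ there is $j \ge i$ with $\langle\alpha[j],\alpha[j+1]\rangle \models_T \mathit{step}$, then there is $k$ with $\alpha[k] \models_T \mathit{base}$; and (II) for all $\nu,\nu' \in \mathcal{A}(V)$ with $\nu \models_T \mathit{conc}$ and $\langle \nu,\nu'\rangle \models_T \mathit{step}\lor\mathit{stay}$, we have $\nu' \models_T \mathit{conc}$. *)

theory Defs
  imports Main
begin

text \<open>Formulas are modelled semantically: a formula with free variables in V is the
set of assignments (V -> values) satisfying it in the fixed theory T; a formula with
free variables in V and V' is a relation on pairs of assignments, where the pair
(nu1, nu2) stands for the combined assignment nu1 plus primed nu2.
The finite variable set V is the finite type 'v.\<close>

type_synonym ('v, 'a) assignment = "'v \<Rightarrow> 'a"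
type_synonym ('v, 'a) sformula = "('v, 'a) assignment \<Rightarrow> bool"
type_synonym ('v, 'a) tformula = "('v, 'a) assignment \<Rightarrow> ('v, 'a) assignment \<Rightarrow> bool"

definition is_GAL ::
  "('v, 'a) sformula \<Rightarrow> ('v, 'a) tformula \<Rightarrow> ('v, 'a) tformula \<Rightarrow> ('v, 'a) sformula \<Rightarrow> bool"
where
  "is_GAL base stay step conc \<longleftrightarrow>
     (\<forall>\<alpha> :: nat \<Rightarrow> ('v, 'a) assignment.
        conc (\<alpha> 0) \<longrightarrow>
        (\<forall>i. step (\<alpha> i) (\<alpha> (Suc i)) \<or> stay (\<alpha> i) (\<alpha> (Suc i))) \<longrightarrow>
        (\<forall>i. \<exists>j\<ge>i. step (\<alpha> j) (\<alpha> (Suc j))) \<longrightarrow>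
        (\<exists>k. base (\<alpha> k)))
   \<and> (\<forall>\<nu> \<nu>'. conc \<nu> \<and> (step \<nu> \<nu>' \<or> stay \<nu> \<nu>') \<longrightarrow> conc \<nu>')"

end

theory Submission
  imports Defs
begin

theorem lemma2:
  fixes base0 base1 conc0 conc1 :: "('v::finite, 'a) sformula"
    and stay0 stay1 step0 step1 :: "('v, 'a) tformula"
  assumes "is_GAL base0 stay0 step0 conc0"
    and "is_GAL base1 stay1 step1 conc1"
  shows "is_GAL (\<lambda>\<nu>. base0 \<nu> \<or> base1 \<nu>)
                (\<lambda>\<nu> \<nu>'. stay0 \<nu> \<nu>' \<and> stay1 \<nu> \<nu>')
                (\<lambda>\<nu> \<nu>'. (conc0 \<nu> \<and> step0 \<nu> \<nu>') \<or> (conc1 \<nu> \<and> step1 \<nu> \<nu>' \<and> stay0 \<nu> \<nu>'))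
                (\<lambda>\<nu>. conc0 \<nu> \<or> conc1 \<nu>)"
proof -
  from assms(1) have I0: "\<And>\<alpha>. conc0 (\<alpha> 0) \<Longrightarrow>
        (\<forall>i. step0 (\<alpha> i) (\<alpha> (Suc i)) \<or> stay0 (\<alpha> i) (\<alpha> (Suc i))) \<Longrightarrow>
        (\<forall>i. \<exists>j\<ge>i. step0 (\<alpha> j) (\<alpha> (Suc j))) \<Longrightarrow> (\<exists>k. base0 (\<alpha> k))"
    and C0: "\<And>\<nu> \<nu>'. conc0 \<nu> \<Longrightarrow> step0 \<nu> \<nu>' \<or> stay0 \<nu> \<nu>' \<Longrightarrow> conc0 \<nu>'"
    unfolding is_GAL_def by blast+
  from assms(2) have I1: "\<And>\<alpha>. conc1 (\<alpha> 0) \<Longrightarrow>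
        (\<forall>i. step1 (\<alpha> i) (\<alpha> (Suc i)) \<or> stay1 (\<alpha> i) (\<alpha> (Suc i))) \<Longrightarrow>
        (\<forall>i. \<exists>j\<ge>i. step1 (\<alpha> j) (\<alpha> (Suc j))) \<Longrightarrow> (\<exists>k. base1 (\<alpha> k))"
    and C1: "\<And>\<nu> \<nu>'. conc1 \<nu> \<Longrightarrow> step1 \<nu> \<nu>' \<or> stay1 \<nu> \<nu>' \<Longrightarrow> conc1 \<nu>'"
    unfolding is_GAL_def by blast+
  show ?thesis
    unfolding is_GAL_def
  proof (intro conjI allI impI)
    fix \<nu> \<nu>' :: "('v,'a) assignment"
    assume "(conc0 \<nu> \<or> conc1 \<nu>) \<and> ((conc0 \<nu> \<and> step0 \<nu> \<nu>' \<or> conc1 \<nu> \<and> step1 \<nu> \<nu>' \<and> stay0 \<nu> \<nu>') \<or> stay0 \<nu> \<nu>' \<and> stay1 \<nu> \<nu>')"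
    then show "conc0 \<nu>' \<or> conc1 \<nu>'" using C0 C1 by blast
  next
    fix \<alpha> :: "nat \<Rightarrow> ('v,'a) assignment"
    let ?S = "\<lambda>i. (conc0 (\<alpha> i) \<and> step0 (\<alpha> i) (\<alpha> (Suc i)) \<or> conc1 (\<alpha> i) \<and> step1 (\<alpha> i) (\<alpha> (Suc i)) \<and> stay0 (\<alpha> i) (\<alpha> (Suc i)))"
    let ?T = "\<lambda>i. stay0 (\<alpha> i) (\<alpha> (Suc i)) \<and> stay1 (\<alpha> i) (\<alpha> (Suc i))"
    assume h0: "conc0 (\<alpha> 0) \<or> conc1 (\<alpha> 0)"
      and tr: "\<forall>i. ?S i \<or> ?T i"
      and inf: "\<forall>i. \<exists>j\<ge>i. ?S j"
    show "\<exists>k. base0 (\<alpha> k) \<or> base1 (\<alpha> k)"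
    proof (cases "\<forall>i. \<exists>j\<ge>i. conc0 (\<alpha> j) \<and> step0 (\<alpha> j) (\<alpha> (Suc j))")
      case True
      then obtain k where k: "conc0 (\<alpha> k)" by blast
      have all0: "\<forall>i. step0 (\<alpha> i) (\<alpha> (Suc i)) \<or> stay0 (\<alpha> i) (\<alpha> (Suc i))"
        using tr by blast
      have "\<exists>m. base0 ((\<lambda>i. \<alpha> (k + i)) m)"
      proof (rule I0)
        show "conc0 (\<alpha> (k + 0))" using k by simp
        show "\<forall>i. step0 (\<alpha> (k + i)) (\<alpha> (k + Suc i)) \<or> stay0 (\<alpha> (k + i)) (\<alpha> (k + Suc i))"
          using all0 by (metis add_Suc_right)
        show "\<forall>i. \<exists>j\<ge>i. step0 (\<alpha> (k + j)) (\<alpha> (k + Suc j))"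
        proof
          fix i
          obtain j where "j \<ge> k + i" "step0 (\<alpha> j) (\<alpha> (Suc j))" using True by blast
          then show "\<exists>j\<ge>i. step0 (\<alpha> (k + j)) (\<alpha> (k + Suc j))"
            by (intro exI[of _ "j - k"]) auto
        qed
      qed
      then show ?thesis by blast
    next
      case False
      then obtain m where m: "\<And>j. j \<ge> m \<Longrightarrow> \<not> (conc0 (\<alpha> j) \<and> step0 (\<alpha> j) (\<alpha> (Suc j)))" by blast
      have inf1: "\<forall>i. \<exists>j\<ge>i. j \<ge> m \<and> conc1 (\<alpha> j) \<and> step1 (\<alpha> j) (\<alpha> (Suc j))"
      proof
        fix i
        obtain j where "j \<ge> i + m" "?S j" using inf by blast
        then show "\<exists>j\<ge>i. j \<ge> m \<and> conc1 (\<alpha> j) \<and> step1 (\<alpha> j) (\<alpha> (Suc j))"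
          using m[of j] by (intro exI[of _ j]) auto
      qed
      then obtain k where k: "k \<ge> m" "conc1 (\<alpha> k)" by blast
      have "\<exists>n. base1 ((\<lambda>i. \<alpha> (k + i)) n)"
      proof (rule I1)
        show "conc1 (\<alpha> (k + 0))" using k by simp
        show "\<forall>i. step1 (\<alpha> (k + i)) (\<alpha> (k + Suc i)) \<or> stay1 (\<alpha> (k + i)) (\<alpha> (k + Suc i))"
        proof
          fix i
          have "?S (k+i) \<or> ?T (k+i)" using tr by blast
          then show "step1 (\<alpha> (k + i)) (\<alpha> (k + Suc i)) \<or> stay1 (\<alpha> (k + i)) (\<alpha> (k + Suc i))"
            using m[of "k+i"] k by auto
        qed
        show "\<forall>i. \<exists>j\<ge>i. step1 (\<alpha> (k + j)) (\<alpha> (k + Suc j))"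
        proof
          fix i
          obtain j where "j \<ge> k + i" "step1 (\<alpha> j) (\<alpha> (Suc j))" using inf1 by blast
          then show "\<exists>j\<ge>i. step1 (\<alpha> (k + j)) (\<alpha> (k + Suc j))"
            by (intro exI[of _ "j - k"]) auto
        qed
      qed
      then show ?thesis by blast
    qed
  qed
qed

end
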